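(* Let $\mathbb M$ be an $(n,n-1)$-free sequential Morse matching on an orthogonally based finite-type chain complex $(\mathbf C,I)$ of real inner product spaces, with maps $\Phi^{\mathbb M}:\mathbf C^{\mathbb M}\to\mathbf C$, $\Psi^{\mathbb M}:\mathbf C\to\mathbf C^{\mathbb M}$ and critical cells $\mathbb M^0$. Then (1) $\Phi_n^{\mathbb M}\Psi_n^{\mathbb M}(s)\in\bigoplus_{\alpha\in\mathbb M^0\cap I_n}C_\alpha$ for all $s\in\mathbf C_n$, and (2) $\Psi^{\mathbb M\dagger}_{n-1}\Phi^{\mathbb M\dagger}_{n-1}(s)\in\bigoplus_{\beta\in\mathbb M^0\cap I_{n-1}}C_\beta$ for all $s\in\mathbf C_{n-1}$.
   Context: Based chain complex: chain complex $(\mathbf C,\partial)$ of finite-dimensional real inner product spaces $\mathbf C_n$, $n\ge0$, with disjoint finite index sets $I_n$ and $\mathbf C_n=\bigoplus_{\alpha\in I_n}C_\alpha$; orthogonally based means $C_\alpha\perp C_{\alpha'}$ for $\alpha\ne\alpha'$. $\partial_{\beta,\alpha}=\pi_\beta\partial_n i_\alpha$. Graph: edges $\alpha\to\beta$ when $\partial_{\beta,\alpha}\ne0$. Morse matching: edge set $M$ with each cell on at most one edge, $\partial_{\beta,\alpha}$ an isomorphism for $\alpha\to\beta\in M$, and "directed path from $\alpha$ to $\beta$ in the graph with $M$ reversed" a partial order on each $I_n$; $M^0$ = unmatched cells. With $\Gamma_{\beta,\alpha}$ the sum over directed paths from $\alpha$ to $\beta$ in the reversed graph of composites of $\partial_{\sigma_{i+1},\sigma_i}$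 (ordinary steps) and $-\partial_{\sigma_i,\sigma_{i+1}}^{-1}$ (reversed matched edges): $\mathbf C^M_n=\bigoplus_{\alpha\in I_n\cap M^0}C_\alpha$ with boundary $\sum_{\beta\in M^0\cap I_{n-1}}\Gamma_{\beta,\alpha}$ and restricted inner product, $\Phi^M=\sum_{\beta\in I_n}\Gamma_{\beta,\alpha}$ on critical $C_\alpha$, $\Psi^M=\sum_{\beta\in M^0\cap I_n}\Gamma_{\beta,\alpha}$ on $C_\alpha$. A sequential Morse matching $\mathbb M=(M_{(1)},\dots,M_{(k)})$: $M_{(1)}$ a Morse matching on $(\mathbf C,I)$, $M_{(j+1)}$ a Morse matching on the based complex $\mathbf C^{M_{(j)}}$; $\mathbf C^{\mathbb M}=\mathbf C^{M_{(k)}}$, $\mathbb M^0=M_{(k)}^0$, $\Phi^{\mathbb M}=\Phi^{M_{(1)}}\circ\cdots\circ\Phi^{M_{(k)}}$, $\Psi^{\mathbb M}=\Psi^{M_{(k)}}\circ\cdots\circ\Psi^{M_{(1)}}$. $\mathbb M$ is $(n,n-1)$-free if no $M_{(j)}$ pairs an $n$-cell with an $(n-1)$-cell. $\dagger$ denotes adjoint. *)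

theory Defs
  imports "HOL-Analysis.Analysis"
begin

text \<open>A based chain complex is represented inside one ambient finite-dimensional real
inner product space 'v: a finite set of cells, a degree function, for each cell alpha
a subspace C_alpha of 'v, and a boundary map.\<close>

record ('c, 'v) bcx =
  cells :: "'c set"
  deg   :: "'c \<Rightarrow> nat"
  sp    :: "'c \<Rightarrow> 'v set"
  bd    :: "'v \<Rightarrow> 'v"

definition chain_grp :: "('c, 'v::real_vector) bcx \<Rightarrow> nat \<Rightarrow> 'v set" where
  "chain_grp X n = span (\<Union>a\<in>{a\<in>cells X. deg X a = n}. sp X a)"

definition oproj :: "'v::real_inner set \<Rightarrow> 'v \<Rightarrow> 'v" where
  "oproj S v = (THE p. p \<in> S \<and> (\<forall>s\<in>S. inner (v - p) s = 0))"

definition ortho_based :: "('c, 'v::euclidean_space) bcx \<Rightarrow> bool" where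
  "ortho_based X \<longleftrightarrow>
     finite (cells X) \<and>
     (\<forall>a\<in>cells X. subspace (sp X a)) \<and>
     (\<forall>a\<in>cells X. \<forall>a'\<in>cells X. a \<noteq> a' \<longrightarrow>
         (\<forall>x\<in>sp X a. \<forall>y\<in>sp X a'. inner x y = 0)) \<and>
     linear (bd X) \<and>
     (\<forall>a\<in>cells X. \<forall>x\<in>sp X a.
         (if deg X a = 0 then bd X x = 0 else bd X x \<in> chain_grp X (deg X a - 1))) \<and>
     (\<forall>a\<in>cells X. \<forall>x\<in>sp X a. bd X (bd X x) = 0)"

definition dpart :: "('c, 'v::real_inner) bcx \<Rightarrow> 'c \<Rightarrow> 'c \<Rightarrow> 'v \<Rightarrow> 'v" where
  "dpart X b a v = oproj (sp X b) (bd X (oproj (sp X a) v))"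

definition dinv :: "('c, 'v::real_inner) bcx \<Rightarrow> 'c \<Rightarrow> 'c \<Rightarrow> 'v \<Rightarrow> 'v" where
  "dinv X b a v = inv_into (sp X a) (dpart X b a) (oproj (sp X b) v)"

definition edge :: "('c, 'v::real_inner) bcx \<Rightarrow> 'c \<Rightarrow> 'c \<Rightarrow> bool" where
  "edge X a b \<longleftrightarrow> a \<in> cells X \<and> b \<in> cells X \<and> deg X b + 1 = deg X a \<and>
      (\<exists>x\<in>sp X a. dpart X b a x \<noteq> 0)"

definition rstep :: "('c, 'v::real_inner) bcx \<Rightarrow> ('c \<times> 'c) set \<Rightarrow> 'c \<Rightarrow> 'c \<Rightarrow> bool" where
  "rstep X M x y \<longleftrightarrow> (edge X x y \<and> (x, y) \<notin> M) \<or> (y, x) \<in> M"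

definition reach :: "('c, 'v::real_inner) bcx \<Rightarrow> ('c \<times> 'c) set \<Rightarrow> 'c rel" where
  "reach X M = {(x, y). rstep X M x y}\<^sup>*"

definition morse_matching :: "('c, 'v::real_inner) bcx \<Rightarrow> ('c \<times> 'c) set \<Rightarrow> bool" where
  "morse_matching X M \<longleftrightarrow>
     (\<forall>(a, b)\<in>M. edge X a b) \<and>
     (\<forall>e\<in>M. \<forall>e'\<in>M. e \<noteq> e' \<longrightarrow> {fst e, snd e} \<inter> {fst e', snd e'} = {}) \<and>
     (\<forall>(a, b)\<in>M. bij_betw (dpart X b a) (sp X a) (sp X b)) \<and>
     (\<forall>n. partial_order_on {a \<in> cells X. deg X a = n}
             {(a, b). deg X a = n \<and> deg X b = n \<and> a \<in> cells X \<and> b \<in> cells X \<and>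
                      (a, b) \<in> reach X M})"

definition crit :: "('c, 'v) bcx \<Rightarrow> ('c \<times> 'c) set \<Rightarrow> 'c set" where
  "crit X M = {a \<in> cells X. \<forall>e\<in>M. a \<noteq> fst e \<and> a \<noteq> snd e}"

definition stepmap :: "('c, 'v::real_inner) bcx \<Rightarrow> ('c \<times> 'c) set \<Rightarrow> 'c \<Rightarrow> 'c \<Rightarrow> 'v \<Rightarrow> 'v" where
  "stepmap X M x y = (if (y, x) \<in> M then (\<lambda>v. - dinv X x y v) else dpart X y x)"

fun pcomp :: "('c, 'v::real_inner) bcx \<Rightarrow> ('c \<times> 'c) set \<Rightarrow> 'c list \<Rightarrow> 'v \<Rightarrow> 'v" where
  "pcomp X M [] = id"
| "pcomp X M [x] = id"
| "pcomp X M (x # y # p) = pcomp X M (y # p) \<circ> stepmap X M x y"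

fun valid_path :: "('c, 'v::real_inner) bcx \<Rightarrow> ('c \<times> 'c) set \<Rightarrow> 'c list \<Rightarrow> bool" where
  "valid_path X M [] = False"
| "valid_path X M [x] = (x \<in> cells X)"
| "valid_path X M (x # y # p) = (x \<in> cells X \<and> rstep X M x y \<and> valid_path X M (y # p))"

text \<open>Directed paths from a to b in the reversed graph (the graph is acyclic for a Morse
matching, so all such paths are simple).\<close>
definition paths :: "('c, 'v::real_inner) bcx \<Rightarrow> ('c \<times> 'c) set \<Rightarrow> 'c \<Rightarrow> 'c \<Rightarrow> 'c list set" where
  "paths X M a b = {p. valid_path X M p \<and> distinct p \<and> hd p = a \<and> last p = b}"

definition Gam :: "('c, 'v::real_inner) bcx \<Rightarrow> ('c \<times> 'c) set \<Rightarrow> 'c \<Rightarrow> 'c \<Rightarrow> 'v \<Rightarrow> 'v" where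
  "Gam X M b a v = (\<Sum>p\<in>paths X M a b. pcomp X M p (oproj (sp X a) v))"

definition reduce :: "('c, 'v::real_inner) bcx \<Rightarrow> ('c \<times> 'c) set \<Rightarrow> ('c, 'v) bcx" where
  "reduce X M = \<lparr> cells = crit X M, deg = deg X, sp = sp X,
      bd = (\<lambda>v. \<Sum>a\<in>crit X M. \<Sum>b\<in>{b\<in>crit X M. deg X b + 1 = deg X a}. Gam X M b a v) \<rparr>"

definition PhiM :: "('c, 'v::real_inner) bcx \<Rightarrow> ('c \<times> 'c) set \<Rightarrow> 'v \<Rightarrow> 'v" where
  "PhiM X M v = (\<Sum>a\<in>crit X M. \<Sum>b\<in>{b\<in>cells X. deg X b = deg X a}. Gam X M b a v)"

definition PsiM :: "('c, 'v::real_inner) bcx \<Rightarrow> ('c \<times> 'c) set \<Rightarrow> 'v \<Rightarrow> 'v" where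
  "PsiM X M v = (\<Sum>a\<in>cells X. \<Sum>b\<in>{b\<in>crit X M. deg X b = deg X a}. Gam X M b a v)"

fun seq_morse :: "('c, 'v::real_inner) bcx \<Rightarrow> ('c \<times> 'c) set list \<Rightarrow> bool" where
  "seq_morse X [] = True"
| "seq_morse X (M # Ms) = (morse_matching X M \<and> seq_morse (reduce X M) Ms)"

fun reduce_seq :: "('c, 'v::real_inner) bcx \<Rightarrow> ('c \<times> 'c) set list \<Rightarrow> ('c, 'v) bcx" where
  "reduce_seq X [] = X"
| "reduce_seq X (M # Ms) = reduce_seq (reduce X M) Ms"

fun Phi_seq :: "('c, 'v::real_inner) bcx \<Rightarrow> ('c \<times> 'c) set list \<Rightarrow> 'v \<Rightarrow> 'v" where
  "Phi_seq X [] = id"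
| "Phi_seq X (M # Ms) = PhiM X M \<circ> Phi_seq (reduce X M) Ms"

fun Psi_seq :: "('c, 'v::real_inner) bcx \<Rightarrow> ('c \<times> 'c) set list \<Rightarrow> 'v \<Rightarrow> 'v" where
  "Psi_seq X [] = id"
| "Psi_seq X (M # Ms) = Psi_seq (reduce X M) Ms \<circ> PsiM X M"

definition seq_free :: "('c, 'v) bcx \<Rightarrow> ('c \<times> 'c) set list \<Rightarrow> nat \<Rightarrow> bool" where
  "seq_free X Ms n \<longleftrightarrow>
     (\<forall>M\<in>set Ms. \<forall>(a, b)\<in>M. \<not> (deg X a = n \<and> deg X b + 1 = n))"

definition radj :: "'v::real_inner set \<Rightarrow> ('v \<Rightarrow> 'v) \<Rightarrow> 'v \<Rightarrow> 'v" where
  "radj U f w = (THE u. u \<in> U \<and> (\<forall>x\<in>U. inner (f x) w = inner x u))"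

end

theory Submission
  imports Defs
begin

lemma oproj_unique:
  fixes S :: "'v::euclidean_space set"
  assumes "subspace S" "p \<in> S" "\<forall>s\<in>S. inner (v - p) s = 0"
  shows "oproj S v = p"
  unfolding oproj_def
proof (rule the_equality)
  show "p \<in> S \<and> (\<forall>s\<in>S. inner (v - p) s = 0)" using assms by blast
next
  fix q assume q: "q \<in> S \<and> (\<forall>s\<in>S. inner (v - q) s = 0)"
  have d: "p - q \<in> S" using assms q by (simp add: subspace_diff)
  have "inner (p - q) (p - q) = inner (v - q) (p - q) - inner (v - p) (p - q)"
    by (simp add: algebra_simps inner_diff_left)
  also have "\<dots> = 0" using q assms d by simp
  finally show "q = p" by simp
qed

lemma oproj_props:
  fixes S :: "'v::euclidean_space set"
  assumes "subspace S"
  shows "oproj S v \<in> S \<and> (\<forall>s\<in>S. inner (v - oproj S v) s = 0)"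
proof -
  obtain y z where y: "y \<in> span S" and z: "\<And>w. w \<in> span S \<Longrightarrow> orthogonal z w" and e: "v = y + z"
    using orthogonal_subspace_decomp_exists by blast
  have yS: "y \<in> S" using y assms by (metis span_eq_iff)
  have "\<forall>s\<in>S. inner (v - y) s = 0" using z e span_superset by (force simp: orthogonal_def)
  then have "oproj S v = y" using oproj_unique assms yS by blast
  then show ?thesis using yS \<open>\<forall>s\<in>S. inner (v - y) s = 0\<close> by simp
qed

lemma oproj_in: "subspace (S::'v::euclidean_space set) \<Longrightarrow> oproj S v \<in> S"
  using oproj_props by blast

lemma oproj_orth: "subspace (S::'v::euclidean_space set) \<Longrightarrow> s \<in> S \<Longrightarrow> inner (v - oproj S v) s = 0"
  using oproj_props by blast

lemma oproj_id: "subspace (S::'v::euclidean_space set) \<Longrightarrow> v \<in> S \<Longrightarrow> oproj S v = v"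
  by (rule oproj_unique) auto

lemma oproj_zero_orth: "subspace (S::'v::euclidean_space set) \<Longrightarrow> \<forall>s\<in>S. inner v s = 0 \<Longrightarrow> oproj S v = 0"
  by (rule oproj_unique) (auto simp: subspace_0)

lemma oproj_0: "subspace (S::'v::euclidean_space set) \<Longrightarrow> oproj S 0 = 0"
  by (rule oproj_zero_orth) auto

lemma oproj_cong_orth:
  fixes S :: "'v::euclidean_space set"
  assumes "subspace S" "\<forall>s\<in>S. inner (x - y) s = 0"
  shows "oproj S x = oproj S y"
proof (rule oproj_unique[OF assms(1) oproj_in[OF assms(1)]], intro ballI)
  fix s assume s: "s \<in> S"
  have "inner (x - oproj S y) s = inner (x - y) s + inner (y - oproj S y) s"
    by (simp add: inner_diff_left)
  then show "inner (x - oproj S y) s = 0" using assms s oproj_orth by simp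
qed

lemma oproj_selfadj:
  fixes S :: "'v::euclidean_space set"
  assumes "subspace S"
  shows "inner (oproj S x) w = inner x (oproj S w)"
proof -
  have "inner (oproj S x) w = inner (oproj S x) (oproj S w) + inner (w - oproj S w) (oproj S x)"
    by (simp add: inner_diff_left inner_diff_right inner_commute)
  also have "\<dots> = inner (oproj S x) (oproj S w)" using oproj_orth[OF assms oproj_in[OF assms]] by simp
  also have "\<dots> = inner x (oproj S w) - inner (x - oproj S x) (oproj S w)"
    by (simp add: inner_diff_left)
  also have "\<dots> = inner x (oproj S w)" using oproj_orth[OF assms oproj_in[OF assms]] by simp
  finally show ?thesis .
qed

definition portho :: "'c set \<Rightarrow> ('c \<Rightarrow> 'v::real_inner set) \<Rightarrow> bool" where
  "portho A S \<longleftrightarrow> (\<forall>a\<in>A. subspace (S a)) \<and>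
     (\<forall>a\<in>A. \<forall>a'\<in>A. a \<noteq> a' \<longrightarrow> (\<forall>x\<in>S a. \<forall>y\<in>S a'. inner x y = 0))"

lemma resid_orth:
  fixes S :: "'c \<Rightarrow> 'v::euclidean_space set"
  assumes "finite A" "portho A S" "b \<in> A" "s \<in> S b"
  shows "inner (v - (\<Sum>a\<in>A. oproj (S a) v)) s = 0"
proof -
  have "(\<Sum>a\<in>A. inner (oproj (S a) v) s) = (\<Sum>a\<in>A. if a = b then inner (oproj (S b) v) s else 0)"
  proof (rule sum.cong)
    fix a assume a: "a \<in> A"
    show "inner (oproj (S a) v) s = (if a = b then inner (oproj (S b) v) s else 0)"
      using assms a oproj_in[of "S a" v] unfolding portho_def by auto
  qed simp
  also have "\<dots> = inner (oproj (S b) v) s" using assms(1,3) by simp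
  finally have "inner (v - (\<Sum>a\<in>A. oproj (S a) v)) s = inner (v - oproj (S b) v) s"
    by (simp add: inner_diff_left inner_sum_left)
  also have "\<dots> = 0" using assms oproj_orth unfolding portho_def by blast
  finally show ?thesis .
qed

lemma orth_span:
  fixes v :: "'v::euclidean_space"
  assumes "v \<in> span B" "\<forall>x\<in>B. inner x s = 0"
  shows "inner v s = 0"
  using orthogonal_to_span[of v B s] assms by (simp add: orthogonal_def inner_commute)

lemma decomp:
  fixes S :: "'c \<Rightarrow> 'v::euclidean_space set"
  assumes "finite A" "portho A S" "v \<in> span (\<Union>a\<in>A. S a)"
  shows "(\<Sum>a\<in>A. oproj (S a) v) = v"
proof -
  let ?P = "(\<Sum>a\<in>A. oproj (S a) v)"
  have P: "?P \<in> span (\<Union>a\<in>A. S a)"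
    by (rule span_sum) (use assms oproj_in span_superset in \<open>force simp: portho_def\<close>)
  have d: "v - ?P \<in> span (\<Union>a\<in>A. S a)" using P assms(3) by (simp add: span_diff)
  have "\<forall>x\<in>(\<Union>a\<in>A. S a). inner x (v - ?P) = 0"
    using resid_orth[OF assms(1,2)] by (auto simp: inner_commute)
  then have "inner (v - ?P) (v - ?P) = 0" using orth_span[OF d] by blast
  then show ?thesis by simp
qed


definition WI :: "('c, 'v::euclidean_space) bcx \<Rightarrow> bool" where
  "WI X \<longleftrightarrow> finite (cells X) \<and> portho (cells X) (sp X) \<and> bd X 0 = 0"

lemma WI_sub: "WI X \<Longrightarrow> a \<in> cells X \<Longrightarrow> subspace (sp X a)"
  unfolding WI_def portho_def by blast

lemma WI_orth: "WI X \<Longrightarrow> a \<in> cells X \<Longrightarrow> a' \<in> cells X \<Longrightarrow> a \<noteq> a' \<Longrightarrow> x \<in> sp X a \<Longrightarrow> y \<in> sp X a' \<Longrightarrow> inner x y = 0"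
  unfolding WI_def portho_def by blast

lemma crit_sub: "crit X M \<subseteq> cells X"
  unfolding crit_def by auto

lemma mm_edge: "morse_matching X M \<Longrightarrow> (a, b) \<in> M \<Longrightarrow> edge X a b"
  unfolding morse_matching_def by blast

lemma mm_bij: "morse_matching X M \<Longrightarrow> (a, b) \<in> M \<Longrightarrow> bij_betw (dpart X b a) (sp X a) (sp X b)"
  unfolding morse_matching_def by blast

lemma valid_path_cells: "valid_path X M p \<Longrightarrow> set p \<subseteq> cells X"
  by (induction X M p rule: valid_path.induct) (auto simp: rstep_def edge_def)

lemma valid_path_ne: "valid_path X M p \<Longrightarrow> p \<noteq> []"
  by (cases p) auto

lemma dpart_0:
  assumes "WI X" "x \<in> cells X" "y \<in> cells X"
  shows "dpart X y x 0 = 0"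
  using assms by (simp add: dpart_def oproj_0 WI_sub WI_def)

lemma stepmap_0:
  assumes "WI X" "morse_matching X M" "x \<in> cells X" "rstep X M x y"
  shows "stepmap X M x y 0 = 0"
proof (cases "(y, x) \<in> M")
  case True
  have e: "edge X y x" using mm_edge[OF assms(2) True] .
  then have yc: "y \<in> cells X" by (simp add: edge_def)
  have b: "bij_betw (dpart X x y) (sp X y) (sp X x)" using mm_bij[OF assms(2) True] .
  have d0: "dpart X x y 0 = 0" using dpart_0[OF assms(1) yc assms(3)] .
  have z: "0 \<in> sp X y" using WI_sub[OF assms(1) yc] by (simp add: subspace_0)
  have i: "inv_into (sp X y) (dpart X x y) 0 = 0"
    using inv_into_f_f[OF bij_betw_imp_inj_on[OF b] z] unfolding d0 .
  have o: "oproj (sp X x) 0 = 0" using oproj_0[OF WI_sub[OF assms(1,3)]] .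
  show ?thesis unfolding stepmap_def dinv_def using True i o by simp
next
  case False
  then have "edge X x y" using assms(4) by (simp add: rstep_def)
  then have yc: "y \<in> cells X" by (simp add: edge_def)
  have "dpart X y x 0 = 0" using dpart_0[OF assms(1,3) yc] .
  then show ?thesis using False by (simp add: stepmap_def)
qed

lemma stepmap_in:
  assumes "WI X" "morse_matching X M" "rstep X M x y"
  shows "stepmap X M x y v \<in> sp X y"
proof (cases "(y, x) \<in> M")
  case True
  have e: "edge X y x" using mm_edge[OF assms(2) True] .
  then have yc: "y \<in> cells X" and xc: "x \<in> cells X" by (simp_all add: edge_def)
  have b: "bij_betw (dpart X x y) (sp X y) (sp X x)" using mm_bij[OF assms(2) True] .
  have "oproj (sp X x) v \<in> dpart X x y ` sp X y"
    using oproj_in[OF WI_sub[OF assms(1) xc]] b by (simp add: bij_betw_def)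
  then have "inv_into (sp X y) (dpart X x y) (oproj (sp X x) v) \<in> sp X y"
    by (rule inv_into_into)
  then show ?thesis using True WI_sub[OF assms(1) yc]
    by (simp add: stepmap_def dinv_def subspace_neg)
next
  case False
  then have "edge X x y" using assms(3) by (simp add: rstep_def)
  then have "y \<in> cells X" by (simp add: edge_def)
  then show ?thesis using False oproj_in[OF WI_sub[OF assms(1)]] by (simp add: stepmap_def dpart_def)
qed

lemma pcomp_0:
  assumes "WI X" "morse_matching X M"
  shows "valid_path X M p \<Longrightarrow> pcomp X M p 0 = 0"
proof (induction p rule: induct_list012)
  case (3 x y p)
  then show ?case using stepmap_0[OF assms] by simp
qed auto

lemma pcomp_in:
  assumes "WI X" "morse_matching X M"
  shows "valid_path X M p \<Longrightarrow> v \<in> sp X (hd p) \<Longrightarrow> pcomp X M p v \<in> sp X (last p)"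
proof (induction p arbitrary: v rule: induct_list012)
  case (3 x y p)
  then show ?case using stepmap_in[OF assms] by simp
qed auto

lemma Gam_0:
  assumes "WI X" "morse_matching X M" "oproj (sp X a) v = 0"
  shows "Gam X M b a v = 0"
  unfolding Gam_def assms(3) using pcomp_0[OF assms(1,2)] by (simp add: paths_def)

lemma Gam_in:
  assumes "WI X" "morse_matching X M" "b \<in> cells X"
  shows "Gam X M b a v \<in> sp X b"
  unfolding Gam_def
proof (rule subspace_sum[OF WI_sub[OF assms(1,3)]])
  fix p assume "p \<in> paths X M a b"
  then have p: "valid_path X M p" "hd p = a" "last p = b" by (auto simp: paths_def)
  have "a \<in> cells X" using valid_path_cells[OF p(1)] valid_path_ne[OF p(1)] p(2)
    by (metis hd_in_set subsetD)
  then have "oproj (sp X a) v \<in> sp X (hd p)" using p oproj_in[OF WI_sub[OF assms(1)]] by simp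
  then show "pcomp X M p (oproj (sp X a) v) \<in> sp X b" using pcomp_in[OF assms(1,2) p(1)] p by simp
qed

lemma WI_reduce:
  assumes "WI X" "morse_matching X M"
  shows "WI (reduce X M)"
proof -
  have f: "finite (crit X M)" using assms(1) crit_sub[of X M] finite_subset unfolding WI_def by metis
  have po: "portho (cells X) (sp X)" using assms(1) unfolding WI_def by simp
  have p: "portho (crit X M) (sp X)" using po crit_sub[of X M] unfolding portho_def by (meson subsetD)
  have "Gam X M b a 0 = 0" if "a \<in> crit X M" for a b
  proof -
    have "a \<in> cells X" using that unfolding crit_def by simp
    then have "oproj (sp X a) 0 = 0" using oproj_0 WI_sub[OF assms(1)] by blast
    then show ?thesis using Gam_0[OF assms] by blast
  qed
  then have "bd (reduce X M) 0 = 0" by (simp add: reduce_def)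
  then show ?thesis using f p by (simp add: WI_def reduce_def)
qed


definition freeM :: "('c, 'v) bcx \<Rightarrow> ('c \<times> 'c) set \<Rightarrow> nat \<Rightarrow> bool" where
  "freeM X M n \<longleftrightarrow> (\<forall>(a, b)\<in>M. \<not> (deg X a = n \<and> deg X b + 1 = n))"

lemma deg_path_lt:
  assumes "morse_matching X M" "freeM X M n"
  shows "valid_path X M p \<Longrightarrow> deg X (hd p) < n \<Longrightarrow> \<forall>x\<in>set p. deg X x < n"
proof (induction p rule: induct_list012)
  case (3 x y p)
  have r: "rstep X M x y" using "3.prems"(1) by simp
  have "deg X y < n"
  proof (cases "(y, x) \<in> M")
    case True
    then have "deg X x + 1 = deg X y" using mm_edge[OF assms(1) True] by (simp add: edge_def)
    moreover have "\<not> (deg X y = n \<and> deg X x + 1 = n)" using True assms(2) unfolding freeM_def by blast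
    ultimately show ?thesis using "3.prems"(2) by simp
  next
    case False
    then have "edge X x y" using r by (simp add: rstep_def)
    then show ?thesis using "3.prems"(2) by (simp add: edge_def)
  qed
  then have "\<forall>z\<in>set (y # p). deg X z < n" using "3.IH"(2) "3.prems"(1) by simp
  then show ?case using "3.prems"(2) by simp
qed auto

lemma last_step:
  "valid_path X M p \<Longrightarrow> length p \<ge> 2 \<Longrightarrow> \<exists>x\<in>set p. rstep X M x (last p)"
proof (induction p rule: induct_list012)
  case (3 x y p)
  show ?case
  proof (cases "p = []")
    case True
    then show ?thesis using "3.prems" by simp
  next
    case False
    then have "length (y # p) \<ge> 2" by (cases p) auto
    then obtain z where "z \<in> set (y # p)" "rstep X M z (last (y # p))" using "3.IH"(2) "3.prems"(1) by auto
    then show ?thesis by auto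
  qed
qed auto

lemma single_path: "a \<in> cells X \<Longrightarrow> [a] \<in> paths X M a a"
  by (simp add: paths_def)

lemma Gam_single:
  assumes "paths X M a b = {[a]}"
  shows "Gam X M b a v = oproj (sp X a) v"
  unfolding Gam_def assms by simp

lemma Gam_empty:
  assumes "paths X M a b = {}"
  shows "Gam X M b a v = 0"
  unfolding Gam_def assms by simp

lemma paths_crit_n:
  assumes "morse_matching X M" "freeM X M n" "a \<in> crit X M" "deg X a = n" "deg X b = n"
    and "p \<in> paths X M a b"
  shows "p = [a] \<and> b = a"
proof -
  have v: "valid_path X M p" "distinct p" "hd p = a" "last p = b" using assms(6) by (auto simp: paths_def)
  obtain x r where pr: "p = x # r" using valid_path_ne[OF v(1)] by (cases p) auto
  show ?thesis
  proof (cases r)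
    case Nil then show ?thesis using v pr by simp
  next
    case (Cons y q)
    then have Two: "p = x # y # q" using pr by simp
    then have xa: "x = a" using v by simp
    have r: "rstep X M a y" using v(1) Two xa by simp
    have "(y, a) \<notin> M" using assms(3) unfolding crit_def by force
    then have "edge X a y" using r by (simp add: rstep_def)
    then have "deg X y < n" using assms(4) by (simp add: edge_def)
    then have "\<forall>z\<in>set (y # q). deg X z < n"
      using deg_path_lt[OF assms(1,2), of "y # q"] v(1) Two by simp
    moreover have "last (y # q) = b" using v(4) Two by simp
    moreover have "last (y # q) \<in> set (y # q)" by simp
    ultimately show ?thesis using assms(5) by auto
  qed
qed

lemma Gam_crit_n:
  assumes "morse_matching X M" "freeM X M n" "a \<in> crit X M" "deg X a = n" "deg X b = n"
  shows "Gam X M b a v = (if b = a then oproj (sp X a) v else 0)"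
proof (cases "b = a")
  case True
  have "a \<in> cells X" using assms(3) unfolding crit_def by simp
  then have i: "[a] \<in> paths X M a b" unfolding True by (rule single_path)
  have "paths X M a b = {[a]}"
  proof (rule set_eqI, rule iffI)
    fix p assume "p \<in> paths X M a b"
    then show "p \<in> {[a]}" using paths_crit_n[OF assms] by simp
  next
    fix p assume "p \<in> {[a]}"
    then show "p \<in> paths X M a b" using i by simp
  qed
  then have "Gam X M b a v = oproj (sp X a) v" by (rule Gam_single)
  then show ?thesis using True by simp
next
  case False
  have "paths X M a b = {}"
  proof (rule equals0I)
    fix p assume "p \<in> paths X M a b"
    then show False using paths_crit_n[OF assms] False by simp
  qed
  then have "Gam X M b a v = 0" by (rule Gam_empty)
  then show ?thesis using False by simp
qed

lemma paths_n1:
  assumes "morse_matching X M" "freeM X M n" "n \<ge> 1" "deg X a = n - 1"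
    "b \<in> crit X M" "deg X b = n - 1" "p \<in> paths X M a b"
  shows "p = [a] \<and> b = a"
proof -
  have v: "valid_path X M p" "distinct p" "hd p = a" "last p = b" using assms(7) by (auto simp: paths_def)
  have lt: "\<forall>z\<in>set p. deg X z < n" using deg_path_lt[OF assms(1,2) v(1)] v(3) assms(3,4) by simp
  show ?thesis
  proof (cases "length p \<ge> 2")
    case True
    then obtain x where x: "x \<in> set p" "rstep X M x b" using last_step[OF v(1)] v(4) by auto
    have "(b, x) \<notin> M" using assms(5) unfolding crit_def by force
    then have "edge X x b" using x(2) by (simp add: rstep_def)
    then have "deg X x = n" using assms(3,6) by (simp add: edge_def)
    then show ?thesis using lt x(1) by auto
  next
    case False
    obtain x r where pr: "p = x # r" using valid_path_ne[OF v(1)] by (cases p) auto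
    then have "r = []" using False by (cases r) auto
    then show ?thesis using v pr by simp
  qed
qed

lemma Gam_n1:
  assumes "morse_matching X M" "freeM X M n" "n \<ge> 1" "deg X a = n - 1"
    "b \<in> crit X M" "deg X b = n - 1"
  shows "Gam X M b a v = (if b = a then oproj (sp X a) v else 0)"
proof (cases "b = a")
  case True
  have "a \<in> cells X" using assms(5) True unfolding crit_def by simp
  then have i: "[a] \<in> paths X M a b" unfolding True by (rule single_path)
  have "paths X M a b = {[a]}"
  proof (rule set_eqI, rule iffI)
    fix p assume "p \<in> paths X M a b"
    then show "p \<in> {[a]}" using paths_n1[OF assms] by simp
  next
    fix p assume "p \<in> {[a]}"
    then show "p \<in> paths X M a b" using i by simp
  qed
  then have "Gam X M b a v = oproj (sp X a) v" by (rule Gam_single)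
  then show ?thesis using True by simp
next
  case False
  have "paths X M a b = {}"
  proof (rule equals0I)
    fix p assume "p \<in> paths X M a b"
    then show False using paths_n1[OF assms] False by simp
  qed
  then have "Gam X M b a v = 0" by (rule Gam_empty)
  then show ?thesis using False by simp
qed


lemma span_orth_oproj:
  assumes "WI X" "B \<subseteq> cells X" "a \<in> cells X" "a \<notin> B" "w \<in> span (\<Union>b\<in>B. sp X b)"
  shows "oproj (sp X a) w = 0"
proof (rule oproj_zero_orth[OF WI_sub[OF assms(1,3)]], intro ballI)
  fix s assume s: "s \<in> sp X a"
  have "\<forall>x\<in>(\<Union>b\<in>B. sp X b). inner x s = 0"
  proof
    fix x assume "x \<in> (\<Union>b\<in>B. sp X b)"
    then obtain b where b: "b \<in> B" "x \<in> sp X b" by blast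
    have "b \<noteq> a" using b assms(4) by metis
    moreover have "b \<in> cells X" using b assms(2) by (rule_tac subsetD) 
    ultimately show "inner x s = 0" using WI_orth[OF assms(1) _ assms(3) _ b(2) s] by blast
  qed
  then show "inner w s = 0" using orth_span[OF assms(5)] by blast
qed

lemma chain_grp_reduce:
  "chain_grp (reduce X M) d = span (\<Union>a\<in>{a\<in>crit X M. deg X a = d}. sp X a)"
  by (simp add: chain_grp_def reduce_def)

lemma WI_portho_sub: "WI X \<Longrightarrow> B \<subseteq> cells X \<Longrightarrow> portho B (sp X)"
  unfolding WI_def portho_def by (meson subsetD)

lemma WI_fin_sub: "WI X \<Longrightarrow> B \<subseteq> cells X \<Longrightarrow> finite B"
  unfolding WI_def by (meson finite_subset)

lemma PhiM_id:
  assumes "WI X" "morse_matching X M" "freeM X M n" "w \<in> chain_grp (reduce X M) n"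
  shows "PhiM X M w = w"
proof -
  let ?B = "{a\<in>crit X M. deg X a = n}"
  have Bs: "?B \<subseteq> cells X" using crit_sub[of X M] by blast
  have wB: "w \<in> span (\<Union>a\<in>?B. sp X a)" using assms(4) unfolding chain_grp_reduce .
  have inner: "(\<Sum>b\<in>{b\<in>cells X. deg X b = deg X a}. Gam X M b a w) =
      (if deg X a = n then oproj (sp X a) w else 0)" if a: "a \<in> crit X M" for a
  proof (cases "deg X a = n")
    case True
    have ac: "a \<in> cells X" using a unfolding crit_def by simp
    have fin: "finite {b\<in>cells X. deg X b = deg X a}" using WI_fin_sub[OF assms(1)] by simp
    have "(\<Sum>b\<in>{b\<in>cells X. deg X b = deg X a}. Gam X M b a w) =
        (\<Sum>b\<in>{b\<in>cells X. deg X b = deg X a}. if b = a then oproj (sp X a) w else 0)"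
    proof (rule sum.cong[OF refl])
      fix b assume "b \<in> {b\<in>cells X. deg X b = deg X a}"
      then have "deg X b = n" using True by simp
      then show "Gam X M b a w = (if b = a then oproj (sp X a) w else 0)"
        using Gam_crit_n[OF assms(2,3) a True] by blast
    qed
    also have "\<dots> =
      (if a \<in> {b\<in>cells X. deg X b = deg X a} then oproj (sp X a) w else 0)"
      by (rule sum.delta[OF fin])
    also have "\<dots> = oproj (sp X a) w" using ac by simp
    finally show ?thesis using True by simp
  next
    case False
    have ac: "a \<in> cells X" using a unfolding crit_def by simp
    have "a \<notin> ?B" using False by simp
    then have "oproj (sp X a) w = 0" using span_orth_oproj[OF assms(1) Bs ac _ wB] by blast
    then have "Gam X M b a w = 0" for b using Gam_0[OF assms(1,2)] by blast
    then show ?thesis using False by simp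
  qed
  have fc: "finite (crit X M)" using WI_fin_sub[OF assms(1) crit_sub] .
  have "PhiM X M w = (\<Sum>a\<in>crit X M. if deg X a = n then oproj (sp X a) w else 0)"
    unfolding PhiM_def using inner by (rule sum.cong[OF refl])
  also have "\<dots> = (\<Sum>a\<in>?B. oproj (sp X a) w)" using fc by (simp add: sum.inter_filter)
  also have "\<dots> = w"
    by (rule decomp[OF WI_fin_sub[OF assms(1) Bs] WI_portho_sub[OF assms(1) Bs] wB])
  finally show ?thesis .
qed

lemma PsiM_in:
  assumes "WI X" "morse_matching X M" "v \<in> chain_grp X d"
  shows "PsiM X M v \<in> chain_grp (reduce X M) d"
proof -
  have sub: "subspace (chain_grp (reduce X M) d)" unfolding chain_grp_def by (rule subspace_span)
  have "Gam X M b a v \<in> chain_grp (reduce X M) d"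
    if a: "a \<in> cells X" and b: "b \<in> {b\<in>crit X M. deg X b = deg X a}" for a b
  proof (cases "deg X a = d")
    case True
    have bc: "b \<in> cells X" using b unfolding crit_def by simp
    have "Gam X M b a v \<in> sp X b" using Gam_in[OF assms(1,2) bc] .
    moreover have "b \<in> {a\<in>crit X M. deg X a = d}" using b True by simp
    ultimately have "Gam X M b a v \<in> (\<Union>a\<in>{a\<in>crit X M. deg X a = d}. sp X a)"
      by (rule_tac UN_I)
    then show ?thesis unfolding chain_grp_reduce by (rule span_base)
  next
    case False
    have s1: "{a\<in>cells X. deg X a = d} \<subseteq> cells X" by (rule subsetI) simp
    have s2: "a \<notin> {a\<in>cells X. deg X a = d}" using False by simp
    have s3: "v \<in> span (\<Union>a\<in>{a\<in>cells X. deg X a = d}. sp X a)" using assms(3) unfolding chain_grp_def .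
    have "oproj (sp X a) v = 0"
      by (rule span_orth_oproj[OF assms(1) s1 a s2 s3])
    then have "Gam X M b a v = 0" using Gam_0[OF assms(1,2)] by blast
    then show ?thesis by (simp add: span_zero chain_grp_def)
  qed
  note G = this
  show ?thesis unfolding PsiM_def
  proof (rule subspace_sum[OF sub])
    fix a assume a: "a \<in> cells X"
    show "(\<Sum>b\<in>{b\<in>crit X M. deg X b = deg X a}. Gam X M b a v) \<in> chain_grp (reduce X M) d"
      by (rule subspace_sum[OF sub], rule G[OF a])
  qed
qed


lemma PsiM_proj:
  assumes "WI X" "morse_matching X M" "freeM X M n" "n \<ge> 1" "v \<in> chain_grp X (n - 1)"
  shows "PsiM X M v = (\<Sum>a\<in>{a\<in>crit X M. deg X a = n - 1}. oproj (sp X a) v)"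
proof -
  have inner: "(\<Sum>b\<in>{b\<in>crit X M. deg X b = deg X a}. Gam X M b a v) =
      (if a \<in> crit X M \<and> deg X a = n - 1 then oproj (sp X a) v else 0)" if a: "a \<in> cells X" for a
  proof (cases "deg X a = n - 1")
    case True
    have fin: "finite {b\<in>crit X M. deg X b = deg X a}"
      using WI_fin_sub[OF assms(1) crit_sub] by simp
    have "(\<Sum>b\<in>{b\<in>crit X M. deg X b = deg X a}. Gam X M b a v) =
        (\<Sum>b\<in>{b\<in>crit X M. deg X b = deg X a}. if b = a then oproj (sp X a) v else 0)"
    proof (rule sum.cong[OF refl])
      fix b assume b: "b \<in> {b\<in>crit X M. deg X b = deg X a}"
      then have b1: "b \<in> crit X M" and b2: "deg X b = n - 1" using True by simp_all
      show "Gam X M b a v = (if b = a then oproj (sp X a) v else 0)"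
        by (rule Gam_n1[OF assms(2,3,4) True b1 b2])
    qed
    also have "\<dots> = (if a \<in> {b\<in>crit X M. deg X b = deg X a} then oproj (sp X a) v else 0)"
      by (rule sum.delta[OF fin])
    also have "\<dots> = (if a \<in> crit X M \<and> deg X a = n - 1 then oproj (sp X a) v else 0)"
      using True by simp
    finally show ?thesis .
  next
    case False
    have s1: "{a\<in>cells X. deg X a = n - 1} \<subseteq> cells X" by (rule subsetI) simp
    have s2: "a \<notin> {a\<in>cells X. deg X a = n - 1}" using False by simp
    have s3: "v \<in> span (\<Union>a\<in>{a\<in>cells X. deg X a = n - 1}. sp X a)" using assms(5) unfolding chain_grp_def .
    have "oproj (sp X a) v = 0"
      by (rule span_orth_oproj[OF assms(1) s1 a s2 s3])
    then have "Gam X M b a v = 0" for b using Gam_0[OF assms(1,2)] by blast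
    then show ?thesis using False by simp
  qed
  have fc: "finite (cells X)" using assms(1) unfolding WI_def by simp
  have "PsiM X M v = (\<Sum>a\<in>cells X. if a \<in> crit X M \<and> deg X a = n - 1 then oproj (sp X a) v else 0)"
    unfolding PsiM_def using inner by (rule sum.cong[OF refl])
  also have "\<dots> = (\<Sum>a\<in>{a\<in>cells X. a \<in> crit X M \<and> deg X a = n - 1}. oproj (sp X a) v)"
    using fc by (simp add: sum.inter_filter)
  also have "{a\<in>cells X. a \<in> crit X M \<and> deg X a = n - 1} = {a\<in>crit X M. deg X a = n - 1}"
    unfolding crit_def by blast
  finally show ?thesis .
qed

lemma reduce_seq_deg: "deg (reduce_seq X Ms) = deg X"
  by (induction Ms arbitrary: X) (simp_all add: reduce_def)

lemma reduce_seq_sp: "sp (reduce_seq X Ms) = sp X"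
  by (induction Ms arbitrary: X) (simp_all add: reduce_def)

lemma reduce_seq_cells: "cells (reduce_seq X Ms) \<subseteq> cells X"
proof (induction Ms arbitrary: X)
  case (Cons M Ms)
  have "cells (reduce_seq (reduce X M) Ms) \<subseteq> cells (reduce X M)" by (rule Cons.IH)
  also have "\<dots> \<subseteq> cells X" by (simp add: reduce_def crit_sub)
  finally show ?case by simp
qed simp

lemma WI_seq: "WI X \<Longrightarrow> seq_morse X Ms \<Longrightarrow> WI (reduce_seq X Ms)"
proof (induction Ms arbitrary: X)
  case (Cons M Ms)
  have m: "morse_matching X M" "seq_morse (reduce X M) Ms" using Cons.prems(2) by simp_all
  have "WI (reduce X M)" using WI_reduce[OF Cons.prems(1) m(1)] .
  then show ?case using Cons.IH m(2) by simp
qed simp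

lemma seq_free_Cons:
  assumes "seq_free X (M # Ms) n"
  shows "freeM X M n" "seq_free (reduce X M) Ms n"
  using assms unfolding seq_free_def freeM_def by (simp_all add: reduce_def)

lemma chain_grp_mono:
  "cells Y \<subseteq> cells X \<Longrightarrow> deg Y = deg X \<Longrightarrow> sp Y = sp X \<Longrightarrow> chain_grp Y d \<subseteq> chain_grp X d"
  unfolding chain_grp_def by (rule span_mono) auto

lemma Psi_seq_in:
  "WI X \<Longrightarrow> seq_morse X Ms \<Longrightarrow> v \<in> chain_grp X d \<Longrightarrow> Psi_seq X Ms v \<in> chain_grp (reduce_seq X Ms) d"
proof (induction Ms arbitrary: X v)
  case (Cons M Ms)
  have m: "morse_matching X M" "seq_morse (reduce X M) Ms" using Cons.prems(2) by simp_all
  have w: "WI (reduce X M)" using WI_reduce[OF Cons.prems(1) m(1)] .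
  have "PsiM X M v \<in> chain_grp (reduce X M) d" using PsiM_in[OF Cons.prems(1) m(1) Cons.prems(3)] .
  then show ?case using Cons.IH[OF w m(2)] by simp
qed simp

lemma Phi_seq_id:
  "WI X \<Longrightarrow> seq_morse X Ms \<Longrightarrow> seq_free X Ms n \<Longrightarrow> w \<in> chain_grp (reduce_seq X Ms) n
    \<Longrightarrow> Phi_seq X Ms w = w"
proof (induction Ms arbitrary: X w)
  case (Cons M Ms)
  have m: "morse_matching X M" "seq_morse (reduce X M) Ms" using Cons.prems(2) by simp_all
  have f: "freeM X M n" "seq_free (reduce X M) Ms n" using seq_free_Cons[OF Cons.prems(3)] by simp_all
  have wi: "WI (reduce X M)" using WI_reduce[OF Cons.prems(1) m(1)] .
  have wf: "w \<in> chain_grp (reduce_seq (reduce X M) Ms) n" using Cons.prems(4) by simp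
  have "Phi_seq (reduce X M) Ms w = w" using Cons.IH[OF wi m(2) f(2) wf] .
  moreover have "w \<in> chain_grp (reduce X M) n"
    using chain_grp_mono[OF reduce_seq_cells reduce_seq_deg reduce_seq_sp] wf by blast
  ultimately show ?case using PhiM_id[OF Cons.prems(1) m(1) f(1)] by simp
qed simp

lemma reduce_deg: "deg (reduce X M) = deg X" by (simp add: reduce_def)
lemma reduce_sp: "sp (reduce X M) = sp X" by (simp add: reduce_def)
lemma reduce_cells: "cells (reduce X M) = crit X M" by (simp add: reduce_def)

lemma Psi_seq_proj:
  "WI X \<Longrightarrow> seq_morse X Ms \<Longrightarrow> seq_free X Ms n \<Longrightarrow> n \<ge> 1 \<Longrightarrow> v \<in> chain_grp X (n - 1)
    \<Longrightarrow> Psi_seq X Ms v = (\<Sum>a\<in>{a\<in>cells (reduce_seq X Ms). deg X a = n - 1}. oproj (sp X a) v)"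
proof (induction Ms arbitrary: X v)
  case Nil
  have A: "{a\<in>cells X. deg X a = n - 1} \<subseteq> cells X" by (rule subsetI) simp
  have "(\<Sum>a\<in>{a\<in>cells X. deg X a = n - 1}. oproj (sp X a) v) = v"
    by (rule decomp[OF WI_fin_sub[OF Nil.prems(1) A] WI_portho_sub[OF Nil.prems(1) A]])
       (use Nil.prems(5) in \<open>simp add: chain_grp_def\<close>)
  then show ?case by simp
next
  case (Cons M Ms)
  have m: "morse_matching X M" "seq_morse (reduce X M) Ms" using Cons.prems(2) by simp_all
  have f: "freeM X M n" "seq_free (reduce X M) Ms n" using seq_free_Cons[OF Cons.prems(3)] by simp_all
  have wi: "WI (reduce X M)" using WI_reduce[OF Cons.prems(1) m(1)] .
  let ?C = "{a\<in>crit X M. deg X a = n - 1}"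
  let ?w = "PsiM X M v"
  have wv: "?w = (\<Sum>a\<in>?C. oproj (sp X a) v)" by (rule PsiM_proj[OF Cons.prems(1) m(1) f(1) Cons.prems(4,5)])
  have wc: "?w \<in> chain_grp (reduce X M) (n - 1)" by (rule PsiM_in[OF Cons.prems(1) m(1) Cons.prems(5)])
  have IH: "Psi_seq (reduce X M) Ms ?w =
     (\<Sum>a\<in>{a\<in>cells (reduce_seq (reduce X M) Ms). deg (reduce X M) a = n - 1}. oproj (sp (reduce X M) a) ?w)"
    by (rule Cons.IH[OF wi m(2) f(2) Cons.prems(4) wc])
  have Cs: "?C \<subseteq> cells X" using crit_sub[of X M] by blast
  have eq: "oproj (sp X a) ?w = oproj (sp X a) v"
    if a: "a \<in> {a\<in>cells (reduce_seq (reduce X M) Ms). deg X a = n - 1}" for a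
  proof -
    have a1: "a \<in> cells (reduce_seq (reduce X M) Ms)" and a2: "deg X a = n - 1" using a by simp_all
    have "a \<in> cells (reduce X M)" by (rule subsetD[OF reduce_seq_cells a1])
    then have aC: "a \<in> ?C" using a2 unfolding reduce_cells by simp
    have ac: "a \<in> cells X" using aC unfolding crit_def by simp
    have "\<forall>s\<in>sp X a. inner (v - ?w) s = 0"
    proof
      fix s assume s: "s \<in> sp X a"
      show "inner (v - ?w) s = 0" unfolding wv
        by (rule resid_orth[OF WI_fin_sub[OF Cons.prems(1) Cs] WI_portho_sub[OF Cons.prems(1) Cs] aC s])
    qed
    then have "oproj (sp X a) v = oproj (sp X a) ?w" by (rule oproj_cong_orth[OF WI_sub[OF Cons.prems(1) ac]])
    then show ?thesis by (rule sym)
  qed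
  have "Psi_seq X (M # Ms) v = Psi_seq (reduce X M) Ms ?w" by simp
  also have "\<dots> = (\<Sum>a\<in>{a\<in>cells (reduce_seq (reduce X M) Ms). deg X a = n - 1}. oproj (sp X a) ?w)"
    unfolding IH reduce_deg reduce_sp ..
  also have "\<dots> = (\<Sum>a\<in>{a\<in>cells (reduce_seq (reduce X M) Ms). deg X a = n - 1}. oproj (sp X a) v)"
    using eq by (rule sum.cong[OF refl])
  finally show ?case by simp
qed


lemma WI_ob: "ortho_based X \<Longrightarrow> WI X"
proof -
  assume o: "ortho_based X"
  have "linear (bd X)" using o unfolding ortho_based_def by simp
  then have "bd X 0 = 0" by (rule linear_0)
  then show "WI X" using o unfolding ortho_based_def WI_def portho_def by simp
qed

theorem mainTheorem12:
  fixes X :: "('c, 'v::euclidean_space) bcx"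
    and Ms :: "('c \<times> 'c) set list"
    and n :: nat
  assumes "ortho_based X"
    and "seq_morse X Ms"
    and "seq_free X Ms n"
  shows "(\<forall>s\<in>chain_grp X n.
            Phi_seq X Ms (Psi_seq X Ms s) \<in> chain_grp (reduce_seq X Ms) n)
       \<and> (n \<ge> 1 \<longrightarrow> (\<forall>s\<in>chain_grp X (n - 1).
            radj (chain_grp X (n - 1)) (Psi_seq X Ms)
                 (radj (chain_grp (reduce_seq X Ms) (n - 1)) (Phi_seq X Ms) s)
              \<in> chain_grp (reduce_seq X Ms) (n - 1)))"
proof (intro conjI impI ballI)
  have wi: "WI X" using WI_ob[OF assms(1)] .
  {
    fix s assume s: "s \<in> chain_grp X n"
    have "Psi_seq X Ms s \<in> chain_grp (reduce_seq X Ms) n" by (rule Psi_seq_in[OF wi assms(2) s])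
    then show "Phi_seq X Ms (Psi_seq X Ms s) \<in> chain_grp (reduce_seq X Ms) n"
      using Phi_seq_id[OF wi assms(2,3)] by simp
  }
  {
    assume n1: "n \<ge> 1"
    fix s assume s: "s \<in> chain_grp X (n - 1)"
    let ?F = "reduce_seq X Ms"
    let ?A = "{a\<in>cells ?F. deg X a = n - 1}"
    let ?U = "chain_grp X (n - 1)"
    define w where "w = radj (chain_grp ?F (n - 1)) (Phi_seq X Ms) s"
    define P where "P = (\<lambda>x. \<Sum>a\<in>?A. oproj (sp X a) x)"
    have As: "?A \<subseteq> cells X"
    proof
      fix a assume "a \<in> ?A"
      then have "a \<in> cells ?F" by simp
      then show "a \<in> cells X" by (rule subsetD[OF reduce_seq_cells])
    qed
    have subU: "subspace ?U" unfolding chain_grp_def by (rule subspace_span)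
    have PF: "P x \<in> chain_grp ?F (n - 1)" for x
      unfolding P_def chain_grp_def reduce_seq_deg reduce_seq_sp
    proof (rule subspace_sum[OF subspace_span])
      fix a assume a: "a \<in> ?A"
      have "a \<in> cells X" using a As by (rule subsetD[rotated])
      then have "oproj (sp X a) x \<in> sp X a" by (rule oproj_in[OF WI_sub[OF wi]])
      then have "oproj (sp X a) x \<in> (\<Union>a\<in>?A. sp X a)" using a by (rule_tac UN_I)
      then show "oproj (sp X a) x \<in> span (\<Union>a\<in>?A. sp X a)" by (rule span_base)
    qed
    have FU: "chain_grp ?F (n - 1) \<subseteq> ?U"
      by (rule chain_grp_mono[OF reduce_seq_cells reduce_seq_deg reduce_seq_sp])
    have PU: "P x \<in> ?U" for x using PF FU by blast
    have Psi: "Psi_seq X Ms x = P x" if "x \<in> ?U" for x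
      unfolding P_def by (rule Psi_seq_proj[OF wi assms(2,3) n1 that])
    have sa: "inner (P x) w = inner x (P w)" for x
    proof -
      have "inner (P x) w = (\<Sum>a\<in>?A. inner (oproj (sp X a) x) w)"
        unfolding P_def by (rule inner_sum_left)
      also have "\<dots> = (\<Sum>a\<in>?A. inner x (oproj (sp X a) w))"
      proof (rule sum.cong[OF refl])
        fix a assume "a \<in> ?A"
        then have "a \<in> cells X" using As by (rule subsetD[rotated])
        then show "inner (oproj (sp X a) x) w = inner x (oproj (sp X a) w)"
          by (rule oproj_selfadj[OF WI_sub[OF wi]])
      qed
      also have "\<dots> = inner x (P w)" unfolding P_def by (rule inner_sum_right[symmetric])
      finally show ?thesis .
    qed
    have "radj ?U (Psi_seq X Ms) w = P w"
      unfolding radj_def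
    proof (rule the_equality)
      show "P w \<in> ?U \<and> (\<forall>x\<in>?U. inner (Psi_seq X Ms x) w = inner x (P w))"
        using PU Psi sa by simp
    next
      fix u assume u: "u \<in> ?U \<and> (\<forall>x\<in>?U. inner (Psi_seq X Ms x) w = inner x u)"
      have d: "u - P w \<in> ?U" using u PU[of w] subspace_diff[OF subU] by simp
      have "inner (u - P w) u = inner (Psi_seq X Ms (u - P w)) w" using u d by simp
      also have "\<dots> = inner (P (u - P w)) w" using Psi[OF d] by simp
      also have "\<dots> = inner (u - P w) (P w)" by (rule sa)
      finally have "inner (u - P w) u = inner (u - P w) (P w)" .
      then have "inner (u - P w) (u - P w) = 0" by (simp add: inner_diff_right)
      then show "u = P w" by simp
    qed
    then show "radj ?U (Psi_seq X Ms) (radj (chain_grp ?F (n - 1)) (Phi_seq X Ms) s)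
        \<in> chain_grp ?F (n - 1)"
      using PF unfolding w_def by simp
  }
qed

end
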